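(* Let $k\ge2$ and $n\le0$. Then $\mathcal{F}_{n,k}(x)$ is the zero polynomial if and only if $q_{n,k}<r_{n,k}$. Equivalently, $\mathcal{F}_{n,k}\equiv0$ exactly when $|n|\in\{kq+q,\,kq+q+1,\dots,kq+k-2\}$ for some $q\in\{0,1,\dots,k-2\}$; this is a block of $k-q-1$ consecutive indices for each such $q$. In particular, $\mathcal{F}_{n,k}\not\equiv0$ whenever $|n|\ge k^2-k-1$, and there are exactly $k(k-1)/2$ indices $n\le0$ (the $k-1$ initial values included) for which $\mathcal{F}_{n,k}\equiv0$.
   Context: For $k\ge2$, the polynomials $\mathcal{F}_{n,k}(x)\in\mathbb{Z}[x]$ ($n\in\mathbb{Z}$) are defined by $\mathcal{F}_{1,k}=1$, $\mathcal{F}_{n,k}=0$ for $n=0,-1,\dots,-(k-2)$, and $\mathcal{F}_{n,k}(x)=\sum_{j=1}^{k}x^{k-j}\mathcal{F}_{n-j,k}(x)$ for all $n\in\mathbb{Z}$. This recurrence is used upwards for $n\ge2$, and downwards for $n\le-(k-1)$ as $\mathcal{F}_{n,k}=\mathcal{F}_{n+k,k}-\sum_{j=1}^{k-1}x^j\mathcal{F}_{n+j,k}$. For $n\le0$, set $q_{n,k}=\lfloor(|n|+1)/k\rfloor$ and let $r_{n,k}\in\{0,\dots,k-1\}$ be the residue of $|n|+1$ modulo $k$. Then $|n|+1=kq_{n,k}+r_{n,k}$. *)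

theory Defs
  imports "HOL-Computational_Algebra.Polynomial"
begin

text \<open>Upward part: FU k m = F_{m+2-k,k}, for m :: nat (indices n >= 2-k).
  Initial values F_{1}=1, F_{0}=...=F_{-(k-2)}=0, then
  F_n = sum_{j=1}^k x^(k-j) F_{n-j} for n >= 2.\<close>
fun FU :: "nat \<Rightarrow> nat \<Rightarrow> int poly" where
  "FU k m = (if m < k then (if m = k - 1 then 1 else 0)
             else (\<Sum>j\<in>{1..k}. monom 1 (k - j) * FU k (m - j)))"

text \<open>Downward part: FD k m = F_{1-m,k}, for m :: nat (indices n <= 1),
  using F_n = F_{n+k} - sum_{j=1}^{k-1} x^j F_{n+j} for n <= -(k-1).\<close>
fun FD :: "nat \<Rightarrow> nat \<Rightarrow> int poly" where
  "FD k m = (if k = 0 \<or> m < k then (if m = 0 then 1 else 0)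
             else FD k (m - k) - (\<Sum>j\<in>{1..k-1}. monom 1 j * FD k (m - j)))"

definition Fib :: "nat \<Rightarrow> int \<Rightarrow> int poly" where
  "Fib k n = (if n \<ge> 1 then FU k (nat (n + int k - 2)) else FD k (nat (1 - n)))"

definition q_nk :: "nat \<Rightarrow> int \<Rightarrow> int" where
  "q_nk k n = (\<bar>n\<bar> + 1) div int k"

definition r_nk :: "nat \<Rightarrow> int \<Rightarrow> int" where
  "r_nk k n = (\<bar>n\<bar> + 1) mod int k"

end

theory Submission
  imports Defs
begin
declare FD.simps[simp del] FU.simps[simp del]

lemma FD_step: "k \<ge> 2 \<Longrightarrow> m \<ge> k \<Longrightarrow>
  FD k m = FD k (m - k) - (\<Sum>j\<in>{1..k-1}. monom 1 j * FD k (m - j))"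
  by (subst FD.simps) simp

lemma FD_small: "m < k \<Longrightarrow> FD k m = (if m = 0 then 1 else 0)"
  by (subst FD.simps) simp

lemma sum_split0: "(\<Sum>j<Suc k'. f j) = f 0 + (\<Sum>j\<in>{1..k'}. (f j :: int poly))"
proof -
  have "(\<Sum>j\<in>{1..k'}. f j) = (\<Sum>j<k'. f (Suc j))"
    by (induction k') (auto simp: atLeastAtMostSuc_conv add.commute)
  then show ?thesis by (simp del: sum.lessThan_Suc add: sum.lessThan_Suc_shift)
qed

lemma FD_rec2:
  assumes k: "k \<ge> 2" and m: "m \<ge> Suc k"
  shows "FD k m = (1 + monom 1 k) * FD k (m - k) - monom 1 1 * FD k (m - k - 1)"
proof -
  define G where "G = FD k"
  define H where "H i = (\<Sum>j<k. monom 1 j * G (i - j))" for i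
  obtain k' where kk: "k = Suc k'" using k by (cases k) auto
  have H1: "H i = G (i - k)" if "i \<ge> k" for i
  proof -
    have "H i = G i + (\<Sum>j\<in>{1..k'}. monom 1 j * G (i - j))"
      unfolding H_def kk by (subst sum_split0) simp
    also have "\<dots> = G (i - k)" using FD_step[OF k that] kk by (simp add: G_def)
    finally show ?thesis .
  qed
  have tel: "H m - monom 1 1 * H (m - 1) = G m - monom 1 k * G (m - k)"
  proof -
    have a: "H m = G m + (\<Sum>j<k'. monom 1 (Suc j) * G (m - Suc j))"
      unfolding H_def kk by (simp del: sum.lessThan_Suc add: sum.lessThan_Suc_shift)
    have "monom 1 1 * H (m - 1) = (\<Sum>j<k. monom 1 (Suc j) * G (m - Suc j))"
      unfolding H_def sum_distrib_left
      by (rule sum.cong) (auto simp: mult.assoc[symmetric] mult_monom)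
    also have "\<dots> = (\<Sum>j<k'. monom 1 (Suc j) * G (m - Suc j)) + monom 1 k * G (m - k)"
      unfolding kk by simp
    finally show ?thesis using a by simp
  qed
  have "H m = G (m - k)" using H1 m by simp
  moreover have "H (m - 1) = G (m - k - 1)" using H1[of "m-1"] m by simp
  ultimately have "G (m - k) - monom 1 1 * G (m - k - 1) = G m - monom 1 k * G (m - k)"
    using tel by simp
  then have "G m = (1 + monom 1 k) * G (m - k) - monom 1 1 * G (m - k - 1)"
    by (simp add: algebra_simps)
  then show ?thesis by (simp add: G_def)
qed

lemma FD_k: "k \<ge> 2 \<Longrightarrow> FD k k = 1"
  apply (subst FD_step, simp, simp)
  apply (subst sum.neutral)
   apply (auto simp: FD_small)
  done

lemma dm: "r < k \<Longrightarrow> (k * a + r) div k = a \<and> (k * a + r) mod k = (r::nat)"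
  by simp

lemma FD_inv:
  assumes k: "k \<ge> 2"
  shows "(m div k < m mod k \<longrightarrow> FD k m = 0) \<and>
         coeff (FD k m) (m mod k) = (-1) ^ (m mod k) * int (m div k choose (m mod k))"
proof (induction m rule: less_induct)
  case (less m)
  define q where "q = m div k"
  define r where "r = m mod k"
  have mqr: "m = k * q + r" unfolding q_def r_def by simp
  have rk: "r < k" unfolding r_def using k by simp
  consider "m < k" | "m = k" | "m \<ge> Suc k" by linarith
  then show ?case
  proof cases
    case 1
    then show ?thesis by (auto simp: FD_small)
  next
    case 2
    have "FD k m = 1" by (simp only: 2 FD_k[OF k])
    moreover have "m div k = 1" "m mod k = 0" using 2 k by auto
    ultimately show ?thesis by simp
  next
    case 3
    have q1: "q \<ge> 1"
    proof (rule ccontr)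
      assume "\<not> q \<ge> 1"
      then have "q = 0" by simp
      with mqr rk 3 show False by simp
    qed
    have e1: "m - k = k * (q - 1) + r"
    proof -
      obtain q' where "q = Suc q'" using q1 by (cases q) auto
      then show ?thesis using mqr by simp
    qed
    have d1: "(m - k) div k = q - 1" "(m - k) mod k = r" using e1 dm[OF rk] by auto
    note IH1 = less[of "m - k"]
    have rec: "coeff (FD k m) i = coeff (FD k (m - k)) i + (if i < k then 0 else coeff (FD k (m - k)) (i - k))
        - (if i < 1 then 0 else coeff (FD k (m - k - 1)) (i - 1))" for i
      apply (subst FD_rec2[OF k 3])
      apply (simp only: coeff_diff distrib_right coeff_add mult_1 coeff_monom_mult)
      done
    note recz = FD_rec2[OF k 3]
    show ?thesis
    proof (cases "r = 0")
      case True
      have "coeff (FD k m) 0 = coeff (FD k (m - k)) 0"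
        using rec[of 0] k by simp
      then show ?thesis using IH1 d1 True 3 k unfolding q_def[symmetric] r_def[symmetric]
        by simp
    next
      case False
      have e2: "m - k - 1 = k * (q - 1) + (r - 1)" using e1 False by simp
      have d2: "(m - k - 1) div k = q - 1" "(m - k - 1) mod k = r - 1"
        using e2 dm[of "r-1" k "q-1"] rk by auto
      note IH2 = less[of "m - k - 1"]
      have lt1: "m - k < m" "m - k - 1 < m" using 3 k by auto
      have z: "FD k m = 0" if qr: "q < r"
      proof -
        have "FD k (m - k) = 0" using IH1 lt1(1) d1 qr by simp
        moreover have "FD k (m - k - 1) = 0" using IH2 lt1(2) d2 qr q1 by simp
        ultimately show ?thesis by (simp only: recz mult_zero_right diff_zero)
      qed
      have "coeff (FD k m) r = coeff (FD k (m - k)) r - coeff (FD k (m - k - 1)) (r - 1)"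
        using rec[of r] rk False by simp
      also have "\<dots> = (-1)^r * int (q - 1 choose r) - (-1)^(r-1) * int (q - 1 choose (r - 1))"
        using conjunct2[OF IH1[OF lt1(1)]] conjunct2[OF IH2[OF lt1(2)]] unfolding d1 d2 by simp
      also have "\<dots> = (-1)^r * int (q choose r)"
      proof -
        obtain r' where r': "r = Suc r'" using False by (cases r) auto
        obtain q' where q': "q = Suc q'" using q1 by (cases q) auto
        show ?thesis unfolding r' q' by (simp add: algebra_simps)
      qed
      finally show ?thesis using z unfolding q_def r_def by simp
    qed
  qed
qed

lemma FD_zero_iff: "k \<ge> 2 \<Longrightarrow> FD k m = 0 \<longleftrightarrow> m div k < m mod k"
proof
  assume k: "k \<ge> 2" and z: "FD k m = 0"
  have "(-1::int) ^ (m mod k) * int (m div k choose (m mod k)) = 0"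
    using conjunct2[OF FD_inv[OF k, of m]] z by simp
  then have "(m div k choose (m mod k)) = 0" by simp
  then show "m div k < m mod k" by simp
next
  assume "k \<ge> 2" "m div k < m mod k"
  then show "FD k m = 0" using FD_inv by blast
qed

lemma Fib_zero_iff:
  assumes k: "k \<ge> 2" and n: "n \<le> 0"
  shows "Fib k n = 0 \<longleftrightarrow> q_nk k n < r_nk k n"
proof -
  define M where "M = nat (1 - n)"
  have Fi: "Fib k n = FD k M" unfolding Fib_def M_def using n by simp
  have aM: "\<bar>n\<bar> + 1 = int M" unfolding M_def using n by simp
  have "q_nk k n = int (M div k)" "r_nk k n = int (M mod k)"
    unfolding q_nk_def r_nk_def aM by (simp_all add: zdiv_int zmod_int)
  then show ?thesis using Fi FD_zero_iff[OF k] by simp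
qed

lemma gauss_lt: "(\<Sum>r<k. r) = k * (k - 1) div (2::nat)"
proof (induction k)
  case (Suc k)
  then show ?case by (cases k) (auto simp: algebra_simps)
qed simp

theorem mainTheorem4:
  fixes k :: nat and n :: int
  assumes "k \<ge> 2" and "n \<le> 0"
  shows "(Fib k n = 0 \<longleftrightarrow> q_nk k n < r_nk k n)
       \<and> (Fib k n = 0 \<longleftrightarrow>
            (\<exists>q\<in>{0..int k - 2}. \<bar>n\<bar> \<in> {int k * q + q .. int k * q + int k - 2}))
       \<and> (\<forall>q\<in>{0..int k - 2}. card {int k * q + q .. int k * q + int k - 2} = nat (int k - q - 1))
       \<and> (\<bar>n\<bar> \<ge> int k ^ 2 - int k - 1 \<longrightarrow> Fib k n \<noteq> 0)
       \<and> card {m::int. m \<le> 0 \<and> Fib k m = 0} = k * (k - 1) div 2"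
proof -
  note k = assms(1)
  note P1 = Fib_zero_iff[OF assms]
  define a where "a = \<bar>n\<bar>"
  define Q where "Q = (a + 1) div int k"
  define R where "R = (a + 1) mod int k"
  have kpos: "int k > 0" using k by simp
  have a0: "a \<ge> 0" unfolding a_def by simp
  have aQR: "a + 1 = int k * Q + R" unfolding Q_def R_def by simp
  have R0: "0 \<le> R" "R < int k" unfolding R_def using kpos by simp_all
  have Q0: "Q \<ge> 0" unfolding Q_def using a0 kpos by (simp add: pos_imp_zdiv_nonneg_iff)
  have QR: "q_nk k n = Q" "r_nk k n = R" unfolding q_nk_def r_nk_def Q_def R_def a_def by simp_all
  have P2: "Q < R \<longleftrightarrow> (\<exists>q\<in>{0..int k - 2}. a \<in> {int k * q + q .. int k * q + int k - 2})"
  proof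
    assume "Q < R"
    then show "\<exists>q\<in>{0..int k - 2}. a \<in> {int k * q + q .. int k * q + int k - 2}"
      using aQR R0 Q0 by (intro bexI[of _ Q]) auto
  next
    assume "\<exists>q\<in>{0..int k - 2}. a \<in> {int k * q + q .. int k * q + int k - 2}"
    then obtain q where q: "0 \<le> q" "q \<le> int k - 2" "int k * q + q \<le> a" "a \<le> int k * q + int k - 2"
      by auto
    define s where "s = a + 1 - int k * q"
    have s: "0 \<le> s" "s < int k" "s > q" unfolding s_def using q by auto
    have e: "a + 1 = int k * q + s" unfolding s_def by simp
    have "Q = q" unfolding Q_def e using s kpos by simp
    moreover have "R = s" unfolding R_def e using s kpos by simp
    ultimately show "Q < R" using s by simp
  qed
  have P3: "\<forall>q\<in>{0..int k - 2}. card {int k * q + q .. int k * q + int k - 2} = nat (int k - q - 1)"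
    by auto
  have P4: "\<bar>n\<bar> \<ge> int k ^ 2 - int k - 1 \<longrightarrow> Fib k n \<noteq> 0"
  proof
    assume "\<bar>n\<bar> \<ge> int k ^ 2 - int k - 1"
    then have "a + 1 \<ge> int k * (int k - 1)" unfolding a_def by (simp add: power2_eq_square algebra_simps)
    then have "(int k * (int k - 1)) div int k \<le> Q" unfolding Q_def by (rule zdiv_mono1) (use kpos in simp)
    then have "int k - 1 \<le> Q" using kpos by simp
    then show "Fib k n \<noteq> 0" using P1 QR R0 by simp
  qed
  define phi where "phi p = 1 - int (k * snd p + fst p)" for p :: "nat \<times> nat"
  define T where "T = (SIGMA r:{..<k}. {..<r})"
  have dmk: "(k * q + r) div k = q" "(k * q + r) mod k = r" if "r < k" for q r
    using that by simp_all
  have Seq: "{m::int. m \<le> 0 \<and> Fib k m = 0} = phi ` T"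
  proof (intro set_eqI iffI)
    fix m assume "m \<in> {m::int. m \<le> 0 \<and> Fib k m = 0}"
    then have m: "m \<le> 0" "Fib k m = 0" by auto
    define M where "M = nat (1 - m)"
    have Fi: "Fib k m = FD k M" unfolding Fib_def M_def using m by simp
    have lt: "M div k < M mod k" using Fi m FD_zero_iff[OF k] by simp
    have "M mod k < k" using k by simp
    then have "(M mod k, M div k) \<in> T" unfolding T_def using lt by simp
    moreover have "m = phi (M mod k, M div k)" unfolding phi_def M_def using m by simp
    ultimately show "m \<in> phi ` T" by blast
  next
    fix m assume "m \<in> phi ` T"
    then obtain r q where rq: "r < k" "q < r" "m = 1 - int (k * q + r)"
      unfolding T_def phi_def by auto
    have "r > 0" using rq by simp
    then have Np: "k * q + r > 0" by simp
    have "\<not> m \<ge> 1" "nat (1 - m) = k * q + r" using rq(3) Np by (simp_all only: diff_diff_eq2 nat_int)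
    then have "Fib k m = FD k (k * q + r)" unfolding Fib_def by simp
    then have "Fib k m = 0" using FD_zero_iff[OF k] dmk[OF rq(1)] rq by simp
    then show "m \<in> {m::int. m \<le> 0 \<and> Fib k m = 0}" using `\<not> m \<ge> 1` by simp
  qed
  have inj: "inj_on phi T"
  proof (rule inj_onI)
    fix x y assume xy: "x \<in> T" "y \<in> T" "phi x = phi y"
    obtain r q where x: "x = (r, q)" "r < k" using xy(1) unfolding T_def by auto
    obtain r' q' where y: "y = (r', q')" "r' < k" using xy(2) unfolding T_def by auto
    have "int (k * q + r) = int (k * q' + r')" using xy(3) unfolding x y phi_def by simp
    then have e: "k * q + r = k * q' + r'" by (simp only: of_nat_eq_iff)
    have "q = q'" using dmk[OF x(2)] dmk[OF y(2)] e by metis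
    moreover have "r = r'" using dmk[OF x(2)] dmk[OF y(2)] e by metis
    ultimately show "x = y" using x y by simp
  qed
  have "card T = (\<Sum>r<k. card {..<r})" unfolding T_def by (rule card_SigmaI) auto
  also have "\<dots> = k * (k - 1) div 2" using gauss_lt by simp
  finally have P5: "card {m::int. m \<le> 0 \<and> Fib k m = 0} = k * (k - 1) div 2"
    unfolding Seq using card_image[OF inj] by simp
  show ?thesis using P1 P2 P3 P4 P5 QR a_def by auto
qed

end
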